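(* Let $(X,d)$ be a locally compact metric space with a flow $\pi$ and let $M$ be a compact subset of $X$. Then $\Omega(M)$ is quasi-attracting, i.e. $\Omega(M)$ is a closed set which is an intersection of attracting sets.
   Context: A flow is a continuous map $\pi: X\times\mathbb{R}\to X$ with $\pi(x,0)=x$ and $\pi(\pi(x,t),s)=\pi(x,t+s)$; write $x\cdot t=\pi(x,t)$ and $Y\cdot T=\{y\cdot s: y\in Y, s\in T\}$. A set $Y$ is positively invariant if $Y\cdot\mathbb{R}^+=Y$. For $Y\subseteq X$, $\omega(Y)=\bigcap_{t\ge0}\overline{Y\cdot[t,\infty)}$. A positively invariant closed set $A\subseteq X$ is an attracting set if there is a neighborhood $U$ of $A$ with $\omega(U)\subseteq A$; a closed set which is an intersection of attracting sets is a quasi-attracting set. For $x,y\in X$ and $\varepsilon,t>0$, an $(\varepsilon,t)$-chain from $x$ to $y$ is a pair of finite sequences $x=x_1,\dots,x_{n+1}=y$ in $X$ and $t_1,\dots,t_n$ in $\mathbb{R}^+$ with $t_i\ge t$ and $d(x_i\cdot t_i,x_{i+1})\le\varepsilon$ for all $i$. $\Omega(x)$ is the set of $y$ such that for every $\varepsilon,t>0$ there is an $(\varepsilon,t)$-chain from $x$ to $y$, and $\Omega(M)=\bigcup_{x\in M}\Omega(x)$. *)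

theory Defs
  imports "HOL-Analysis.Analysis"
begin

definition is_flow :: "('a::topological_space \<Rightarrow> real \<Rightarrow> 'a) \<Rightarrow> bool" where
  "is_flow \<pi> \<longleftrightarrow> continuous_on UNIV (\<lambda>(x, t). \<pi> x t) \<and>
     (\<forall>x. \<pi> x 0 = x) \<and> (\<forall>x t s. \<pi> (\<pi> x t) s = \<pi> x (t + s))"

definition flow_image :: "('a \<Rightarrow> real \<Rightarrow> 'a) \<Rightarrow> 'a set \<Rightarrow> real set \<Rightarrow> 'a set" where
  "flow_image \<pi> Y T = {\<pi> y s | y s. y \<in> Y \<and> s \<in> T}"

definition pos_invariant :: "('a \<Rightarrow> real \<Rightarrow> 'a) \<Rightarrow> 'a set \<Rightarrow> bool" where
  "pos_invariant \<pi> Y \<longleftrightarrow> flow_image \<pi> Y {0..} = Y"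

definition omega_limit :: "('a::topological_space \<Rightarrow> real \<Rightarrow> 'a) \<Rightarrow> 'a set \<Rightarrow> 'a set" where
  "omega_limit \<pi> Y = (\<Inter>t\<in>{0..}. closure (flow_image \<pi> Y {t..}))"

definition attracting_set :: "('a::topological_space \<Rightarrow> real \<Rightarrow> 'a) \<Rightarrow> 'a set \<Rightarrow> bool" where
  "attracting_set \<pi> A \<longleftrightarrow> pos_invariant \<pi> A \<and> closed A \<and>
     (\<exists>U. A \<subseteq> interior U \<and> omega_limit \<pi> U \<subseteq> A)"

definition quasi_attracting :: "('a::topological_space \<Rightarrow> real \<Rightarrow> 'a) \<Rightarrow> 'a set \<Rightarrow> bool" where
  "quasi_attracting \<pi> A \<longleftrightarrow> closed A \<and>
     (\<exists>\<A>. (\<forall>B\<in>\<A>. attracting_set \<pi> B) \<and> A = \<Inter>\<A>)"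

definition chain :: "('a::metric_space \<Rightarrow> real \<Rightarrow> 'a) \<Rightarrow> real \<Rightarrow> real \<Rightarrow> 'a \<Rightarrow> 'a \<Rightarrow> bool" where
  "chain \<pi> \<epsilon> t x y \<longleftrightarrow> (\<exists>n::nat. \<exists>xs ts. n \<ge> 1 \<and> xs 0 = x \<and> xs n = y \<and>
     (\<forall>i<n. ts i \<ge> 0 \<and> ts i \<ge> t \<and> dist (\<pi> (xs i) (ts i)) (xs (Suc i)) \<le> \<epsilon>))"

definition chain_limit :: "('a::metric_space \<Rightarrow> real \<Rightarrow> 'a) \<Rightarrow> 'a \<Rightarrow> 'a set" where
  "chain_limit \<pi> x = {y. \<forall>\<epsilon>>0. \<forall>t>0. chain \<pi> \<epsilon> t x y}"

definition chain_limit_set :: "('a::metric_space \<Rightarrow> real \<Rightarrow> 'a) \<Rightarrow> 'a set \<Rightarrow> 'a set" where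
  "chain_limit_set \<pi> M = (\<Union>x\<in>M. chain_limit \<pi> x)"

end

theory Submission
  imports Defs
begin

inductive ch :: "('a::metric_space \<Rightarrow> real \<Rightarrow> 'a) \<Rightarrow> real \<Rightarrow> real \<Rightarrow> 'a \<Rightarrow> 'a \<Rightarrow> bool"
  for \<pi> \<epsilon> t where
  base: "0 \<le> s \<Longrightarrow> t \<le> s \<Longrightarrow> dist (\<pi> x s) y \<le> \<epsilon> \<Longrightarrow> ch \<pi> \<epsilon> t x y"
| cons: "0 \<le> s \<Longrightarrow> t \<le> s \<Longrightarrow> dist (\<pi> x s) w \<le> \<epsilon> \<Longrightarrow> ch \<pi> \<epsilon> t w y \<Longrightarrow> ch \<pi> \<epsilon> t x y"

lemma chain_imp_ch_aux:
  "\<forall>xs ts. n \<ge> 1 \<longrightarrow> (\<forall>i<n. ts i \<ge> 0 \<and> ts i \<ge> t \<and> dist (\<pi> (xs i) (ts i)) (xs (Suc i)) \<le> \<epsilon>)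
     \<longrightarrow> ch \<pi> \<epsilon> t (xs 0) (xs n)"
proof (induction n)
  case 0 then show ?case by simp
next
  case (Suc m)
  show ?case
  proof (intro allI impI)
    fix xs ts
    assume h: "(\<forall>i<Suc m. ts i \<ge> 0 \<and> ts i \<ge> t \<and> dist (\<pi> (xs i) (ts i)) (xs (Suc i)) \<le> \<epsilon>)"
    show "ch \<pi> \<epsilon> t (xs 0) (xs (Suc m))"
    proof (cases "m = 0")
      case True then show ?thesis using h[rule_format, of 0] by (auto intro: ch.base)
    next
      case False
      have "ch \<pi> \<epsilon> t ((\<lambda>i. xs (Suc i)) 0) ((\<lambda>i. xs (Suc i)) m)"
        using Suc.IH[rule_format, where xs="\<lambda>i. xs (Suc i)" and ts="\<lambda>i. ts (Suc i)"] h False by auto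
      then show ?thesis using h[rule_format, of 0] by (auto intro: ch.cons)
    qed
  qed
qed

lemma chain_iff: "chain \<pi> \<epsilon> t x y \<longleftrightarrow> ch \<pi> \<epsilon> t x y"
proof
  assume "chain \<pi> \<epsilon> t x y"
  then obtain n xs ts where "n \<ge> 1" "xs 0 = x" "xs n = y"
    "\<forall>i<n. ts i \<ge> 0 \<and> ts i \<ge> t \<and> dist (\<pi> (xs i) (ts i)) (xs (Suc i)) \<le> \<epsilon>"
    unfolding chain_def by blast
  then show "ch \<pi> \<epsilon> t x y" using chain_imp_ch_aux[of n t \<pi> \<epsilon>] by blast
next
  assume "ch \<pi> \<epsilon> t x y"
  then show "chain \<pi> \<epsilon> t x y"
  proof (induction rule: ch.induct)
    case (base s x y)
    show ?case unfolding chain_def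
      by (rule exI[of _ 1], rule exI[of _ "\<lambda>i. if i = 0 then x else y"], rule exI[of _ "\<lambda>_. s"])
        (use base in auto)
  next
    case (cons s x w y)
    then obtain n xs ts where h: "n \<ge> 1" "xs 0 = w" "xs n = y"
      "\<forall>i<n. ts i \<ge> 0 \<and> ts i \<ge> t \<and> dist (\<pi> (xs i) (ts i)) (xs (Suc i)) \<le> \<epsilon>"
      unfolding chain_def by blast
    have "\<forall>i<Suc n. case_nat s ts i \<ge> 0 \<and> case_nat s ts i \<ge> t \<and>
       dist (\<pi> (case_nat x xs i) (case_nat s ts i)) (case_nat x xs (Suc i)) \<le> \<epsilon>"
    proof (intro allI impI)
      fix i assume "i < Suc n"
      then show "case_nat s ts i \<ge> 0 \<and> case_nat s ts i \<ge> t \<and>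
       dist (\<pi> (case_nat x xs i) (case_nat s ts i)) (case_nat x xs (Suc i)) \<le> \<epsilon>"
        using h cons.hyps by (cases i) auto
    qed
    then show ?case unfolding chain_def
      by (intro exI[of _ "Suc n"] exI[of _ "case_nat x xs"] exI[of _ "case_nat s ts"]) (use h in auto)
  qed
qed

lemma ch_mono: "ch \<pi> \<epsilon> t x y \<Longrightarrow> \<epsilon> \<le> \<epsilon>' \<Longrightarrow> t' \<le> t \<Longrightarrow> ch \<pi> \<epsilon>' t' x y"
proof (induction rule: ch.induct)
  case (base s x y) then show ?case by (intro ch.base[of s]) auto
next
  case (cons s x w y)
  have "ch \<pi> \<epsilon>' t' w y" using cons by blast
  moreover have "t' \<le> s" "dist (\<pi> x s) w \<le> \<epsilon>'" using cons by auto
  ultimately show ?case using cons(1) ch.cons by blast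
qed

lemma ch_snoc: "ch \<pi> \<epsilon> t x z \<Longrightarrow> 0 \<le> s \<Longrightarrow> t \<le> s \<Longrightarrow> dist (\<pi> z s) w \<le> \<epsilon> \<Longrightarrow> ch \<pi> \<epsilon> t x w"
proof (induction rule: ch.induct)
  case (base s' x y) then show ?case by (meson ch.base ch.cons)
next
  case (cons s' x w' y) then show ?case by (meson ch.cons)
qed

lemma ch_last: "ch \<pi> \<epsilon> t x y \<Longrightarrow> \<exists>p s. (p = x \<or> ch \<pi> \<epsilon> t x p) \<and> 0 \<le> s \<and> t \<le> s \<and> dist (\<pi> p s) y \<le> \<epsilon>"
proof (induction rule: ch.induct)
  case (base s x y) then show ?case by blast
next
  case (cons s x w y)
  then obtain p s' where "(p = w \<or> ch \<pi> \<epsilon> t w p)" "0 \<le> s'" "t \<le> s'" "dist (\<pi> p s') y \<le> \<epsilon>" by blast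
  then show ?case using cons.hyps by (meson ch.base ch.cons)
qed

lemma flow_law: "is_flow \<pi> \<Longrightarrow> \<pi> (\<pi> x t) s = \<pi> x (t + s)"
  unfolding is_flow_def by blast

lemma flow_cont: "is_flow \<pi> \<Longrightarrow> continuous_on UNIV (\<lambda>x. \<pi> x t)"
proof -
  assume "is_flow \<pi>"
  then have c: "continuous_on UNIV (\<lambda>(x, t). \<pi> x t)" unfolding is_flow_def by blast
  have "continuous_on UNIV ((\<lambda>(x, t). \<pi> x t) \<circ> (\<lambda>x. (x, t)))"
    by (rule continuous_on_compose) (auto intro: continuous_intros continuous_on_subset[OF c])
  then show ?thesis by (simp add: o_def)
qed

lemma ch_prepend:
  assumes fl: "is_flow \<pi>" and "ch \<pi> \<epsilon> (2*t) x' z" "t > 0" "dist (\<pi> x t) (\<pi> x' t) \<le> \<epsilon>"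
  shows "ch \<pi> \<epsilon> t x z"
  using assms(2)
proof (cases rule: ch.cases)
  case (base s)
  have "ch \<pi> \<epsilon> t (\<pi> x' t) z"
    by (rule ch.base[of "s - t"]) (use base assms flow_law[OF fl] in auto)
  moreover have "0 \<le> t" "t \<le> t" using assms by auto
  ultimately show ?thesis using assms(4) ch.cons by blast
next
  case (cons s w)
  have "ch \<pi> \<epsilon> t w z" using cons(4) by (rule ch_mono) (use assms in auto)
  moreover have "dist (\<pi> (\<pi> x' t) (s - t)) w \<le> \<epsilon>" "0 \<le> s - t" "t \<le> s - t"
    using cons assms flow_law[OF fl] by auto
  ultimately have "ch \<pi> \<epsilon> t (\<pi> x' t) z" using ch.cons by blast
  moreover have "0 \<le> t" "t \<le> t" using assms by auto
  ultimately show ?thesis using assms(4) ch.cons by blast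
qed

lemma uniform:
  assumes fl: "is_flow \<pi>" and cM: "compact M" and ny: "y \<notin> chain_limit_set \<pi> M"
  shows "\<exists>\<epsilon>>0. \<exists>t>0. \<forall>x\<in>M. \<not> ch \<pi> \<epsilon> t x y"
proof (rule ccontr)
  assume "\<not> ?thesis"
  then have H: "\<And>e t. e > 0 \<Longrightarrow> t > 0 \<Longrightarrow> \<exists>x\<in>M. ch \<pi> e t x y" by blast
  have "\<forall>k::nat. \<exists>x. x \<in> M \<and> ch \<pi> (1 / (real k + 1)) (real k + 1) x y"
  proof
    fix k :: nat show "\<exists>x. x \<in> M \<and> ch \<pi> (1 / (real k + 1)) (real k + 1) x y"
      using H[of "1 / (real k + 1)" "real k + 1"] by auto
  qed
  then obtain f where f: "\<And>k. f k \<in> M" "\<And>k. ch \<pi> (1 / (real k + 1)) (real k + 1) (f k) y"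
    by metis
  obtain l r where l: "l \<in> M" "strict_mono r" "(f \<circ> r) \<longlonglongrightarrow> l"
    using compact_imp_seq_compact[OF cM] f(1) unfolding seq_compact_def by metis
  have "y \<in> chain_limit \<pi> l"
    unfolding chain_limit_def mem_Collect_eq chain_iff
  proof (intro allI impI)
    fix \<epsilon> t :: real assume e: "\<epsilon> > 0" and t: "t > 0"
    have "isCont (\<lambda>x. \<pi> x t) l"
      using flow_cont[OF fl, of t] continuous_on_eq_continuous_at open_UNIV by blast
    then have "(\<lambda>k. \<pi> ((f \<circ> r) k) t) \<longlonglongrightarrow> \<pi> l t"
      using isCont_tendsto_compose[OF _ l(3)] by blast
    then obtain N where N: "\<And>n. n \<ge> N \<Longrightarrow> dist (\<pi> ((f \<circ> r) n) t) (\<pi> l t) < \<epsilon>"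
      using e unfolding lim_sequentially by metis
    define k where "k = max N (nat \<lceil>2*t\<rceil> + nat \<lceil>1/\<epsilon>\<rceil>)"
    define m where "m = r k"
    have km: "k \<le> m" unfolding m_def using seq_suble[OF l(2)] by auto
    have "real m \<ge> real (nat \<lceil>2*t\<rceil> + nat \<lceil>1/\<epsilon>\<rceil>)" using km unfolding k_def by auto
    moreover have "real (nat \<lceil>2*t\<rceil>) \<ge> 2*t" "real (nat \<lceil>1/\<epsilon>\<rceil>) \<ge> 1/\<epsilon>"
      by linarith+
    ultimately have m1: "real m \<ge> 2*t" "real m \<ge> 1/\<epsilon>"
      by linarith+
    have "1 / (real m + 1) \<le> \<epsilon>"
    proof -
      have "1/\<epsilon> \<le> real m + 1" using m1 by linarith
      then show ?thesis using e by (simp add: field_simps)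
    qed
    then have "ch \<pi> \<epsilon> (2*t) (f m) y"
      using ch_mono[OF f(2)[of m]] m1 by simp
    moreover have "dist (\<pi> l t) (\<pi> (f m) t) \<le> \<epsilon>"
      using N[of k] unfolding k_def m_def by (simp add: dist_commute)
    ultimately show "ch \<pi> \<epsilon> t l y" using ch_prepend[OF fl _ t] by blast
  qed
  then show False using ny l(1) unfolding chain_limit_set_def by blast
qed


lemma fi_mem: "w \<in> flow_image \<pi> P T \<longleftrightarrow> (\<exists>p s. p \<in> P \<and> s \<in> T \<and> w = \<pi> p s)"
  unfolding flow_image_def by blast

lemma omega_closed: "closed (omega_limit \<pi> P)"
  unfolding omega_limit_def by (intro closed_INT) auto

lemma omega_posinv:
  assumes fl: "is_flow \<pi>"
  shows "pos_invariant \<pi> (omega_limit \<pi> P)"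
  unfolding pos_invariant_def
proof
  show "flow_image \<pi> (omega_limit \<pi> P) {0..} \<subseteq> omega_limit \<pi> P"
  proof
    fix w assume "w \<in> flow_image \<pi> (omega_limit \<pi> P) {0..}"
    then obtain a r where a: "a \<in> omega_limit \<pi> P" "r \<ge> 0" "w = \<pi> a r"
      unfolding fi_mem by auto
    show "w \<in> omega_limit \<pi> P" unfolding omega_limit_def
    proof
      fix s :: real assume s: "s \<in> {0..}"
      have ac: "a \<in> closure (flow_image \<pi> P {s..})" using a(1) s unfolding omega_limit_def by blast
      have "(\<lambda>z. \<pi> z r) ` flow_image \<pi> P {s..} \<subseteq> closure (flow_image \<pi> P {s..})"
      proof
        fix q assume "q \<in> (\<lambda>z. \<pi> z r) ` flow_image \<pi> P {s..}"
        then obtain z where z: "z \<in> flow_image \<pi> P {s..}" "q = \<pi> z r" by blast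
        then obtain p u where "p \<in> P" "u \<ge> s" "z = \<pi> p u" unfolding fi_mem by auto
        then have "p \<in> P" "u \<ge> s" "q = \<pi> (\<pi> p u) r" using z by auto
        then have "q \<in> flow_image \<pi> P {s..}" unfolding fi_mem using flow_law[OF fl] a(2)
          by (intro exI[of _ p] exI[of _ "u + r"]) auto
        then show "q \<in> closure (flow_image \<pi> P {s..})" using closure_subset by blast
      qed
      then have "(\<lambda>z. \<pi> z r) ` closure (flow_image \<pi> P {s..}) \<subseteq> closure (flow_image \<pi> P {s..})"
        by (intro image_closure_subset continuous_on_subset[OF flow_cont[OF fl]]) auto
      then show "w \<in> closure (flow_image \<pi> P {s..})" using ac a(3) by blast
    qed
  qed
next
  show "omega_limit \<pi> P \<subseteq> flow_image \<pi> (omega_limit \<pi> P) {0..}"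
  proof
    fix a assume "a \<in> omega_limit \<pi> P"
    moreover have "a = \<pi> a 0" using fl unfolding is_flow_def by simp
    ultimately show "a \<in> flow_image \<pi> (omega_limit \<pi> P) {0..}" unfolding fi_mem by fastforce
  qed
qed

lemma construct:
  assumes fl: "is_flow \<pi>" and t: "t > 0" and e: "\<epsilon> > 0"
    and ny: "\<forall>x\<in>M. \<not> ch \<pi> (2*\<epsilon>) t x y"
    and P: "P = {z. \<exists>x\<in>M. ch \<pi> \<epsilon> t x z}"
  shows "attracting_set \<pi> (omega_limit \<pi> P) \<and> chain_limit_set \<pi> M \<subseteq> omega_limit \<pi> P
     \<and> y \<notin> omega_limit \<pi> P"
proof (intro conjI)
  have sub: "omega_limit \<pi> P \<subseteq> closure (flow_image \<pi> P {t..})"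
    unfolding omega_limit_def using t by auto
  have "omega_limit \<pi> P \<subseteq> interior P"
  proof
    fix z assume "z \<in> omega_limit \<pi> P"
    then have "z \<in> closure (flow_image \<pi> P {t..})" using sub by blast
    then obtain w where w: "w \<in> flow_image \<pi> P {t..}" "dist w z < \<epsilon>/2"
      unfolding closure_approachable using e by (meson half_gt_zero)
    then obtain p u where pu: "p \<in> P" "u \<ge> t" "w = \<pi> p u" unfolding fi_mem by auto
    obtain x where x: "x \<in> M" "ch \<pi> \<epsilon> t x p" using pu(1) P by blast
    have "ball z (\<epsilon>/2) \<subseteq> P"
    proof
      fix q assume "q \<in> ball z (\<epsilon>/2)"
      then have "dist (\<pi> p u) q \<le> \<epsilon>" using w(2) pu(3) dist_triangle[of w q z]
        by (simp add: dist_commute)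
      then have "ch \<pi> \<epsilon> t x q" using ch_snoc[OF x(2), of u] pu t by auto
      then show "q \<in> P" using P x(1) by blast
    qed
    then show "z \<in> interior P" using e by (meson centre_in_ball half_gt_zero interior_maximal open_ball subsetD)
  qed
  then show "attracting_set \<pi> (omega_limit \<pi> P)"
    unfolding attracting_set_def using omega_closed omega_posinv[OF fl] by blast
next
  show "y \<notin> omega_limit \<pi> P"
  proof
    assume "y \<in> omega_limit \<pi> P"
    then have "y \<in> closure (flow_image \<pi> P {t..})" unfolding omega_limit_def using t by auto
    then obtain w where w: "w \<in> flow_image \<pi> P {t..}" "dist w y < \<epsilon>"
      unfolding closure_approachable using e by meson
    then obtain p u where pu: "p \<in> P" "u \<ge> t" "w = \<pi> p u" unfolding fi_mem by auto
    obtain x where x: "x \<in> M" "ch \<pi> \<epsilon> t x p" using pu(1) P by blast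
    have "ch \<pi> (2*\<epsilon>) t x p" using ch_mono[OF x(2)] e by auto
    then have "ch \<pi> (2*\<epsilon>) t x y" using ch_snoc[of \<pi> "2*\<epsilon>" t x p u y] pu w t e by auto
    then show False using ny x(1) by blast
  qed
next
  show "chain_limit_set \<pi> M \<subseteq> omega_limit \<pi> P"
  proof
    fix z assume "z \<in> chain_limit_set \<pi> M"
    then obtain x where x: "x \<in> M" "z \<in> chain_limit \<pi> x" unfolding chain_limit_set_def by blast
    show "z \<in> omega_limit \<pi> P" unfolding omega_limit_def
    proof
      fix s :: real assume s: "s \<in> {0..}"
      show "z \<in> closure (flow_image \<pi> P {s..})" unfolding closure_approachable
      proof (intro allI impI)
        fix \<delta> :: real assume d: "\<delta> > 0"
        define \<delta>' where "\<delta>' = min (\<delta>/2) \<epsilon>"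
        have d': "\<delta>' > 0" "\<delta>' < \<delta>" "\<delta>' \<le> \<epsilon>" unfolding \<delta>'_def using d e by auto
        have "ch \<pi> \<delta>' (s + t) x z" using x(2) d' s t unfolding chain_limit_def chain_iff by auto
        then obtain p u where pu: "p = x \<or> ch \<pi> \<delta>' (s + t) x p" "0 \<le> u" "s + t \<le> u"
          "dist (\<pi> p u) z \<le> \<delta>'" using ch_last by blast
        have "ch \<pi> \<epsilon> t x (\<pi> p t)"
        proof (cases "p = x")
          case True then show ?thesis using ch.base[of t t \<pi> x "\<pi> x t" \<epsilon>] t e by auto
        next
          case False
          then have "ch \<pi> \<delta>' (s + t) x p" using pu(1) by auto
          then have "ch \<pi> \<epsilon> t x p" by (rule ch_mono) (use d' s in auto)
          then show ?thesis using ch_snoc[of \<pi> \<epsilon> t x p t "\<pi> p t"] t e by auto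
        qed
        then have "\<pi> p t \<in> P" using P x(1) by blast
        moreover have "\<pi> (\<pi> p t) (u - t) = \<pi> p u" using flow_law[OF fl] by simp
        ultimately have "\<pi> p u \<in> flow_image \<pi> P {s..}" unfolding fi_mem using pu(3)
          by (intro exI[of _ "\<pi> p t"] exI[of _ "u - t"]) auto
        then show "\<exists>w\<in>flow_image \<pi> P {s..}. dist w z < \<delta>" using pu(4) d' by force
      qed
    qed
  qed
qed

theorem theorem3p6:
  fixes \<pi> :: "'a::metric_space \<Rightarrow> real \<Rightarrow> 'a" and M :: "'a set"
  assumes "locally compact (UNIV :: 'a set)"
    and "is_flow \<pi>"
    and "compact M"
  shows "quasi_attracting \<pi> (chain_limit_set \<pi> M)"
proof -
  define \<A> where "\<A> = {B. attracting_set \<pi> B \<and> chain_limit_set \<pi> M \<subseteq> B}"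
  have eq: "chain_limit_set \<pi> M = \<Inter>\<A>"
  proof
    show "chain_limit_set \<pi> M \<subseteq> \<Inter>\<A>" unfolding \<A>_def by blast
    show "\<Inter>\<A> \<subseteq> chain_limit_set \<pi> M"
    proof
      fix y assume y: "y \<in> \<Inter>\<A>"
      show "y \<in> chain_limit_set \<pi> M"
      proof (rule ccontr)
        assume ny: "y \<notin> chain_limit_set \<pi> M"
        obtain \<epsilon> t where et: "\<epsilon> > 0" "t > 0" "\<forall>x\<in>M. \<not> ch \<pi> \<epsilon> t x y"
          using uniform[OF assms(2,3) ny] by blast
        have "\<forall>x\<in>M. \<not> ch \<pi> (2*(\<epsilon>/2)) t x y" using et by simp
        from construct[OF assms(2) et(2) _ this refl] et(1)
        obtain A where "A \<in> \<A>" "y \<notin> A" unfolding \<A>_def by auto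
        then show False using y by blast
      qed
    qed
  qed
  have "closed (\<Inter>\<A>)" unfolding \<A>_def attracting_set_def by (intro closed_Inter) blast
  moreover have "\<forall>B\<in>\<A>. attracting_set \<pi> B" unfolding \<A>_def by blast
  ultimately show ?thesis unfolding quasi_attracting_def using eq by metis
qed

end
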